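(* The $k$-linear category $k[\Delta_{\mathrm{inj}}]$ is free as a left and as a right $u_\Delta(\Omega)$-module, where $u_\Delta(\Omega)$ denotes the image of the $k$-linear functor $u_\Delta\colon\Omega\to k[\Delta_{\mathrm{inj}}]$.
   Context: Let $k$ be a field. For a small category $\mathcal C$, $k[\mathcal C]$ is its $k$-linearization: same objects, $k[\mathcal C](x,y)$ the $k$-vector space with basis $\mathrm{Hom}_{\mathcal C}(x,y)$, composition extended bilinearly. $\Delta_{\mathrm{inj}}$ is the category with objects $[n]=\{0<1<\dots<n\}$, $n\ge 0$, and injective order-preserving maps as morphisms; for $0\le i\le n$, $\delta^i\colon[n-1]\to[n]$ is the injective order-preserving map omitting $i$. $\Omega$ is the $k$-linear category with objects $[n]$, $n\ge0$, generated by arrows $d_n\colon[n-1]\to[n]$ for $n\ge1$ subject only to the relations $d_{n+1}d_n=0$. The $k$-linear functor $u_\Delta\colon\Omega\to k[\Delta_{\mathrm{inj}}]$ is the identity on objects and sends $d_n\mapsto\sum_{i=0}^n(-1)^i\delta^i$. *)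

theory Defs
  imports Main "HOL-Library.Function_Algebras"
begin

text \<open>A morphism [m] -> [n] of Delta_inj is an injective order-preserving map
  {0..m} -> {0..n}, represented canonically as a function nat => nat that is
  strictly monotone on {0..m}, maps {0..m} into {0..n}, and is 0 outside {0..m}.\<close>

definition hom_inj :: "nat \<Rightarrow> nat \<Rightarrow> (nat \<Rightarrow> nat) set" where
  "hom_inj m n = {g. strict_mono_on {0..m} g \<and> g ` {0..m} \<subseteq> {0..n} \<and> (\<forall>i>m. g i = 0)}"

definition cmp :: "nat \<Rightarrow> (nat \<Rightarrow> nat) \<Rightarrow> (nat \<Rightarrow> nat) \<Rightarrow> (nat \<Rightarrow> nat)" where
  "cmp m h g = (\<lambda>i. if i \<le> m then h (g i) else 0)"

text \<open>k[Delta_inj]([m],[n]): k-valued functions supported on hom_inj m n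
  (formal k-linear combinations of morphisms; hom sets are finite).\<close>
definition klin :: "nat \<Rightarrow> nat \<Rightarrow> ((nat \<Rightarrow> nat) \<Rightarrow> 'k::field) set" where
  "klin m n = {v. \<forall>g. g \<notin> hom_inj m n \<longrightarrow> v g = 0}"

definition kcomp :: "nat \<Rightarrow> nat \<Rightarrow> nat \<Rightarrow> ((nat \<Rightarrow> nat) \<Rightarrow> 'k::field)
    \<Rightarrow> ((nat \<Rightarrow> nat) \<Rightarrow> 'k) \<Rightarrow> ((nat \<Rightarrow> nat) \<Rightarrow> 'k)" where
  "kcomp m n p w v = (\<lambda>h. \<Sum>(g', g) \<in> hom_inj n p \<times> hom_inj m n.
       if cmp m g' g = h then w g' * v g else 0)"

definition kid :: "nat \<Rightarrow> ((nat \<Rightarrow> nat) \<Rightarrow> 'k::field)" where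
  "kid m = (\<lambda>h. if h = (\<lambda>i. if i \<le> m then i else 0) then 1 else 0)"

definition coface :: "nat \<Rightarrow> nat \<Rightarrow> (nat \<Rightarrow> nat)" where
  "coface n i = (\<lambda>j. if j \<le> n - 1 then (if j < i then j else Suc j) else 0)"

text \<open>u_Delta(d_n) = sum_{i=0}^n (-1)^i delta^i, an element of k[Delta_inj]([n-1],[n]).\<close>
definition uD :: "nat \<Rightarrow> ((nat \<Rightarrow> nat) \<Rightarrow> 'k::field)" where
  "uD n = (\<lambda>h. \<Sum>i\<in>{0..n}. if h = coface n i then (-1) ^ i else 0)"

text \<open>Image under u_Delta of the unique path d_{m+l} ... d_{m+1} : [m] -> [m+l] in Omega.\<close>
fun upath :: "nat \<Rightarrow> nat \<Rightarrow> ((nat \<Rightarrow> nat) \<Rightarrow> 'k::field)" where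
  "upath m 0 = kid m"
| "upath m (Suc l) = kcomp m (m + l) (m + l + 1) (uD (m + l + 1)) (upath m l)"

text \<open>Since Omega([m],[n]) is spanned by the class of
  the unique path of generators from [m] to [n] (and is 0 if m > n), its image under the
  k-linear functor u_Delta is the k-span of u_Delta of that path.\<close>
definition uimg :: "nat \<Rightarrow> nat \<Rightarrow> ((nat \<Rightarrow> nat) \<Rightarrow> 'k::field) set" where
  "uimg m n = (if m \<le> n then {(\<lambda>h. c * upath m (n - m) h) | c. True} else {\<lambda>h. 0})"

text \<open>M is free as a left A-module (action act x a z alpha b = alpha \<circ> b for
  b in M(x,a), alpha in A(a,z)): for every source x there is a set G x of homogeneous
  generators (a,b), b in M(x,a), such that every f in M(x,z) is uniquely a finite sum
  of alpha_g \<circ> b_g with alpha_g in A(a_g,z).\<close>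
definition free_left ::
  "(nat \<Rightarrow> nat \<Rightarrow> 'v::ab_group_add set) \<Rightarrow> (nat \<Rightarrow> nat \<Rightarrow> 'v set)
     \<Rightarrow> (nat \<Rightarrow> nat \<Rightarrow> nat \<Rightarrow> 'v \<Rightarrow> 'v \<Rightarrow> 'v) \<Rightarrow> bool" where
  "free_left A M act \<longleftrightarrow> (\<exists>G :: nat \<Rightarrow> (nat \<times> 'v) set. \<forall>x.
     (\<forall>(a, b) \<in> G x. b \<in> M x a) \<and>
     (\<forall>z. \<forall>f \<in> M x z. \<exists>!\<alpha>.
        (\<forall>g \<in> G x. \<alpha> g \<in> A (fst g) z) \<and> (\<forall>g. g \<notin> G x \<longrightarrow> \<alpha> g = 0) \<and>
        finite {g \<in> G x. \<alpha> g \<noteq> 0} \<and>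
        f = (\<Sum>g \<in> {g \<in> G x. \<alpha> g \<noteq> 0}. act x (fst g) z (\<alpha> g) (snd g))))"

text \<open>M is free as a right A-module (action b \<circ> alpha for b in M(a,z), alpha in A(x,a)).\<close>
definition free_right ::
  "(nat \<Rightarrow> nat \<Rightarrow> 'v::ab_group_add set) \<Rightarrow> (nat \<Rightarrow> nat \<Rightarrow> 'v set)
     \<Rightarrow> (nat \<Rightarrow> nat \<Rightarrow> nat \<Rightarrow> 'v \<Rightarrow> 'v \<Rightarrow> 'v) \<Rightarrow> bool" where
  "free_right A M act \<longleftrightarrow> (\<exists>G :: nat \<Rightarrow> (nat \<times> 'v) set. \<forall>z.
     (\<forall>(a, b) \<in> G z. b \<in> M a z) \<and>
     (\<forall>x. \<forall>f \<in> M x z. \<exists>!\<alpha>.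
        (\<forall>g \<in> G z. \<alpha> g \<in> A x (fst g)) \<and> (\<forall>g. g \<notin> G z \<longrightarrow> \<alpha> g = 0) \<and>
        finite {g \<in> G z. \<alpha> g \<noteq> 0} \<and>
        f = (\<Sum>g \<in> {g \<in> G z. \<alpha> g \<noteq> 0}. act x (fst g) z (snd g) (\<alpha> g))))"

end

theory Submission
  imports Defs
begin

lemma sum_fun_apply: "(\<Sum>i\<in>S. F i) (h::'a) = (\<Sum>i\<in>S. F i h)"
  for F :: "'b \<Rightarrow> 'a \<Rightarrow> 'c::comm_monoid_add"
proof (cases "finite S")
  case True then show ?thesis by (induction S rule: finite_induct) auto
qed simp

definition ind :: "(nat \<Rightarrow> nat) \<Rightarrow> ((nat \<Rightarrow> nat) \<Rightarrow> 'k::field)" where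
  "ind g = (\<lambda>h. if h = g then 1 else 0)"

lemma hom_inj_finite: "finite (hom_inj m n)"
proof -
  have "hom_inj m n \<subseteq> (\<lambda>l i. if i \<le> m then l ! i else 0) ` {l. set l \<subseteq> {0..n} \<and> length l = Suc m}"
  proof
    fix g assume g: "g \<in> hom_inj m n"
    let ?l = "map g [0..<Suc m]"
    have "g = (\<lambda>i. if i \<le> m then ?l ! i else 0)"
      using g unfolding hom_inj_def by (auto simp: fun_eq_iff simp del: upt_Suc)
    moreover have "set ?l \<subseteq> {0..n} \<and> length ?l = Suc m" using g unfolding hom_inj_def
      by (auto simp: image_subset_iff simp del: upt_Suc)
    ultimately show "g \<in> (\<lambda>l i. if i \<le> m then l ! i else 0) ` {l. set l \<subseteq> {0..n} \<and> length l = Suc m}"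
      by blast
  qed
  moreover have "finite {l. set l \<subseteq> {0..n} \<and> length l = Suc m}"
    using finite_lists_length_eq[of "{0..n}" "Suc m"] by simp
  ultimately show ?thesis using finite_subset by blast
qed

lemma cmp_hom: "g \<in> hom_inj m n \<Longrightarrow> g' \<in> hom_inj n p \<Longrightarrow> cmp m g' g \<in> hom_inj m p"
  unfolding hom_inj_def cmp_def strict_mono_on_def by (auto simp: subset_iff) 

lemma kcomp_klin: "kcomp m n p w v \<in> klin m p"
  unfolding klin_def kcomp_def
proof (intro CollectI allI impI)
  fix h assume h: "h \<notin> hom_inj m p"
  show "(\<Sum>(g', g) \<in> hom_inj n p \<times> hom_inj m n. if cmp m g' g = h then w g' * v g else 0) = 0"
    by (rule sum.neutral) (use h cmp_hom in fastforce)
qed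

lemma kcomp_ind_right:
  assumes "g \<in> hom_inj m n"
  shows "kcomp m n p w (ind g) h = (\<Sum>g'\<in>hom_inj n p. if cmp m g' g = h then w g' else 0)"
proof -
  have "kcomp m n p w (ind g) h = (\<Sum>g'\<in>hom_inj n p. \<Sum>g''\<in>hom_inj m n. if cmp m g' g'' = h then w g' * ind g g'' else 0)"
    unfolding kcomp_def by (simp add: sum.cartesian_product)
  also have "\<dots> = (\<Sum>g'\<in>hom_inj n p. if cmp m g' g = h then w g' else 0)"
  proof (rule sum.cong[OF refl])
    fix g' assume "g' \<in> hom_inj n p"
    have "(\<Sum>g''\<in>hom_inj m n. if cmp m g' g'' = h then w g' * ind g g'' else 0)
        = (\<Sum>g''\<in>hom_inj m n. if g'' = g then (if cmp m g' g = h then w g' else 0) else 0)"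
      by (rule sum.cong[OF refl]) (auto simp: ind_def)
    also have "\<dots> = (if cmp m g' g = h then w g' else 0)"
      using assms hom_inj_finite by (simp add: sum.delta')
    finally show "(\<Sum>g''\<in>hom_inj m n. if cmp m g' g'' = h then w g' * ind g g'' else 0) = (if cmp m g' g = h then w g' else 0)" .
  qed
  finally show ?thesis .
qed

lemma kcomp_ind_left:
  assumes "g' \<in> hom_inj n p"
  shows "kcomp m n p (ind g') v h = (\<Sum>g\<in>hom_inj m n. if cmp m g' g = h then v g else 0)"
proof -
  have "kcomp m n p (ind g') v h = (\<Sum>g''\<in>hom_inj n p. \<Sum>g\<in>hom_inj m n. if cmp m g'' g = h then ind g' g'' * v g else 0)"
    unfolding kcomp_def by (simp add: sum.cartesian_product)
  also have "\<dots> = (\<Sum>g''\<in>hom_inj n p. if g'' = g' then (\<Sum>g\<in>hom_inj m n. if cmp m g' g = h then v g else 0) else 0)"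
    by (rule sum.cong[OF refl]) (auto simp: ind_def intro!: sum.cong sum.neutral)
  also have "\<dots> = (\<Sum>g\<in>hom_inj m n. if cmp m g' g = h then v g else 0)"
    using assms hom_inj_finite by (simp add: sum.delta')
  finally show ?thesis .
qed

definition idm :: "nat \<Rightarrow> nat \<Rightarrow> nat" where "idm m = (\<lambda>i. if i \<le> m then i else 0)"

lemma idm_hom: "idm m \<in> hom_inj m m"
  unfolding hom_inj_def idm_def strict_mono_on_def by auto

lemma kid_ind: "kid m = ind (idm m)"
  unfolding kid_def ind_def idm_def by simp

lemma cmp_idm_right: "g \<in> hom_inj m n \<Longrightarrow> cmp m g (idm m) = g"
  unfolding cmp_def idm_def hom_inj_def by (auto simp: fun_eq_iff)

lemma cmp_idm_left: "g \<in> hom_inj m n \<Longrightarrow> cmp m (idm n) g = g"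
  unfolding cmp_def idm_def hom_inj_def by (auto simp: fun_eq_iff image_subset_iff)

lemma kcomp_kid_right: assumes "w \<in> klin m p" shows "kcomp m m p w (kid m) = w"
proof
  fix h
  have "kcomp m m p w (kid m) h = (\<Sum>g'\<in>hom_inj m p. if g' = h then w g' else 0)"
    unfolding kid_ind kcomp_ind_right[OF idm_hom]
    by (rule sum.cong[OF refl]) (simp add: cmp_idm_right)
  also have "\<dots> = w h" using assms hom_inj_finite unfolding klin_def by (auto simp: sum.delta)
  finally show "kcomp m m p w (kid m) h = w h" .
qed

lemma kcomp_kid_left: assumes "v \<in> klin m p" shows "kcomp m p p (kid p) v = v"
proof
  fix h
  have "kcomp m p p (kid p) v h = (\<Sum>g\<in>hom_inj m p. if g = h then v g else 0)"
    unfolding kid_ind kcomp_ind_left[OF idm_hom]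
    by (rule sum.cong[OF refl]) (simp add: cmp_idm_left)
  also have "\<dots> = v h" using assms hom_inj_finite unfolding klin_def by (auto simp: sum.delta)
  finally show "kcomp m p p (kid p) v h = v h" .
qed

lemma kcomp_scale_left: "kcomp m n p (\<lambda>h. c * w h) v = (\<lambda>h. c * kcomp m n p w v h)"
  unfolding kcomp_def by (auto simp: sum_distrib_left intro!: sum.cong)

lemma kcomp_scale_right: "kcomp m n p w (\<lambda>h. c * v h) = (\<lambda>h. c * kcomp m n p w v h)"
  unfolding kcomp_def by (auto simp: sum_distrib_left intro!: sum.cong)

lemma kcomp_zero_left: "kcomp m n p (\<lambda>h. 0) v = (\<lambda>h. 0)"
  unfolding kcomp_def by (auto simp: case_prod_beta intro!: sum.neutral)

lemma kcomp_zero_right: "kcomp m n p w (\<lambda>h. 0) = (\<lambda>h. 0)"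
  unfolding kcomp_def by (auto simp: case_prod_beta intro!: sum.neutral)

lemma ind_klin: "g \<in> hom_inj m n \<Longrightarrow> ind g \<in> klin m n"
  unfolding ind_def klin_def by auto

lemma kid_klin: "kid m \<in> klin m m"
  using ind_klin[OF idm_hom] kid_ind by metis

lemma coface_hom: "1 \<le> n \<Longrightarrow> coface n i \<in> hom_inj (n - 1) n"
  unfolding coface_def hom_inj_def strict_mono_on_def by auto

lemma uD_klin: "1 \<le> n \<Longrightarrow> uD n \<in> klin (n - 1) n"
  unfolding klin_def uD_def using coface_hom by (force intro!: sum.neutral)

lemma sum_uD:
  assumes "finite H" "\<And>i. i \<le> p \<Longrightarrow> coface p i \<in> H"
  shows "(\<Sum>g\<in>H. F g * uD p g) = (\<Sum>i=0..p. (-1)^i * F (coface p i))"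
proof -
  have "(\<Sum>g\<in>H. F g * uD p g) = (\<Sum>g\<in>H. \<Sum>i=0..p. if g = coface p i then (-1)^i * F g else 0)"
    unfolding uD_def by (auto simp: sum_distrib_left intro!: sum.cong)
  also have "\<dots> = (\<Sum>i=0..p. \<Sum>g\<in>H. if g = coface p i then (-1)^i * F (coface p i) else 0)"
    by (subst sum.swap) (auto intro!: sum.cong)
  also have "\<dots> = (\<Sum>i=0..p. (-1)^i * F (coface p i))"
    using assms by (auto simp: sum.delta' intro!: sum.cong)
  finally show ?thesis .
qed

lemma simplicial_id:
  assumes "i < j" "j \<le> m + 2"
  shows "cmp m (coface (m+2) j) (coface (m+1) i) = cmp m (coface (m+2) i) (coface (m+1) (j - 1))"
  using assms unfolding cmp_def coface_def by (auto simp: fun_eq_iff)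

lemma d2_pointwise:
  "kcomp m (m+1) (m+2) (uD (m+2)) (uD (m+1)) h
    = (\<Sum>j=0..m+2. \<Sum>i=0..m+1. (-1)^(i+j) * (if cmp m (coface (m+2) j) (coface (m+1) i) = h then 1 else 0))"
proof -
  have c1: "\<And>i. coface (m+1) i \<in> hom_inj m (m+1)" using coface_hom[of "m+1"] by simp
  have c2: "\<And>i. coface (m+2) i \<in> hom_inj (m+1) (m+2)" using coface_hom[of "m+2"] by simp
  have "kcomp m (m+1) (m+2) (uD (m+2)) (uD (m+1)) h
     = (\<Sum>g'\<in>hom_inj (m+1) (m+2). \<Sum>g\<in>hom_inj m (m+1). (if cmp m g' g = h then uD (m+2) g' else 0) * uD (m+1) g)"
    unfolding kcomp_def sum.cartesian_product by (rule sum.cong[OF refl]) auto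
  also have "\<dots> = (\<Sum>g'\<in>hom_inj (m+1) (m+2). \<Sum>i=0..m+1. (-1)^i * (if cmp m g' (coface (m+1) i) = h then uD (m+2) g' else 0))"
    by (rule sum.cong[OF refl], rule sum_uD) (use hom_inj_finite c1 in auto)
  also have "\<dots> = (\<Sum>g'\<in>hom_inj (m+1) (m+2). (\<Sum>i=0..m+1. (-1)^i * (if cmp m g' (coface (m+1) i) = h then 1 else 0)) * uD (m+2) g')"
    by (simp only: sum_distrib_right) (auto intro!: sum.cong)
  also have "\<dots> = (\<Sum>j=0..m+2. (-1)^j * (\<Sum>i=0..m+1. (-1)^i * (if cmp m (coface (m+2) j) (coface (m+1) i) = h then 1 else 0)))"
    by (rule sum_uD) (use hom_inj_finite c2 in auto)
  also have "\<dots> = (\<Sum>j=0..m+2. \<Sum>i=0..m+1. (-1)^(i+j) * (if cmp m (coface (m+2) j) (coface (m+1) i) = h then 1 else 0))"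
    by (rule sum.cong[OF refl], simp only: sum_distrib_left, rule sum.cong[OF refl], simp only: power_add mult_ac)
  finally show ?thesis .
qed

lemma d2_zero: "kcomp m (m+1) (m+2) (uD (m+2)) (uD (m+1)) = (\<lambda>h. (0::'k::field))"
proof
  fix h
  define F where "F = (\<lambda>(j,i). (-1)^(i+j) * (if cmp m (coface (m+2) j) (coface (m+1) i) = h then 1 else (0::'k)))"
  define S where "S = {0..m+2} \<times> {0..m+1}"
  define A where "A = {p \<in> S. snd p < fst p}"
  define B where "B = {p \<in> S. fst p \<le> snd p}"
  define \<sigma> where "\<sigma> = (\<lambda>(j::nat,i::nat). (i, j - 1))"
  have fin: "finite A" "finite B" unfolding A_def B_def S_def by auto
  have SAB: "S = A \<union> B" "A \<inter> B = {}" unfolding A_def B_def by auto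
  have bij: "bij_betw \<sigma> A B"
  proof (rule bij_betw_byWitness[where f' = "\<lambda>(j,i). (i+1, j)"])
    show "\<forall>a\<in>A. (\<lambda>(j,i). (i+1, j)) (\<sigma> a) = a" unfolding A_def \<sigma>_def by auto
    show "\<forall>a'\<in>B. \<sigma> ((\<lambda>(j,i). (i+1, j)) a') = a'" unfolding B_def \<sigma>_def by auto
    show "\<sigma> ` A \<subseteq> B" unfolding A_def B_def S_def \<sigma>_def by auto
    show "(\<lambda>(j,i). (i+1, j)) ` B \<subseteq> A" unfolding A_def B_def S_def \<sigma>_def by auto
  qed
  have Fs: "F (\<sigma> p) = - F p" if "p \<in> A" for p
  proof -
    obtain j i where p: "p = (j,i)" by force
    have ij: "i < j" "j \<le> m+2" using that unfolding p A_def S_def by auto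
    have sg: "(-1::'k)^(j - 1 + i) = - ((-1)^(i+j))"
      using ij by (cases j) (auto simp: algebra_simps)
    show ?thesis unfolding p \<sigma>_def F_def using simplicial_id[OF ij] sg by simp
  qed
  have "kcomp m (m+1) (m+2) (uD (m+2)) (uD (m+1)) h = (\<Sum>p\<in>S. F p)"
    unfolding d2_pointwise S_def F_def by (rule sum.cartesian_product)
  also have "\<dots> = (\<Sum>p\<in>A. F p) + (\<Sum>p\<in>B. F p)"
    unfolding SAB(1) using fin SAB(2) by (rule sum.union_disjoint)
  also have "(\<Sum>p\<in>B. F p) = (\<Sum>p\<in>A. F (\<sigma> p))"
    using sum.reindex_bij_betw[OF bij, of F] by simp
  also have "\<dots> = - (\<Sum>p\<in>A. F p)" using Fs by (simp add: sum_negf)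
  finally show "kcomp m (m+1) (m+2) (uD (m+2)) (uD (m+1)) h = (0::'k)" by simp
qed

lemma upath_one: "upath m 1 = uD (m+1)"
  using kcomp_kid_right[OF uD_klin[of "m+1"]] by simp

lemma upath_zero: "l \<ge> 2 \<Longrightarrow> upath m l = (\<lambda>h. 0)"
proof (induction l rule: nat_induct_at_least)
  case base
  have "upath m 2 = upath m (Suc 1)" by (simp only: numeral_2_eq_2 One_nat_def)
  also have "\<dots> = kcomp m (m+1) (m+1+1) (uD (m+1+1)) (upath m 1)"
    by (simp only: upath.simps)
  also have "\<dots> = kcomp m (m+1) (m+2) (uD (m+2)) (uD (m+1))"
    by (simp only: upath_one) simp
  also have "\<dots> = (\<lambda>h. 0)" by (rule d2_zero)
  finally show ?case .
next
  case (Suc n) then show ?case by (simp add: kcomp_zero_right)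
qed

lemma sum_ind: "finite P \<Longrightarrow> (\<Sum>p\<in>P. c p * ind p h) = (if h \<in> P then c h else (0::'k::field))"
  unfolding ind_def by (simp add: if_distrib[of "\<lambda>x. _ * x"] sum.delta cong: if_cong)

lemma ind_inj: "ind p = (ind p' :: (nat\<Rightarrow>nat) \<Rightarrow> 'k::field) \<Longrightarrow> p = p'"
  unfolding ind_def by (metis one_neq_zero)

lemma tri:
  fixes f :: "(nat\<Rightarrow>nat) \<Rightarrow> 'k::field" and D :: "(nat\<Rightarrow>nat) \<Rightarrow> (nat\<Rightarrow>nat) \<Rightarrow> 'k"
  assumes PB: "P \<subseteq> B" and finP: "finite P" and finQ: "finite Q"
   and shP: "\<forall>q\<in>Q. sh q \<notin> P"
   and cover: "\<forall>h\<in>B. h \<in> P \<or> (\<exists>q\<in>Q. h = sh q)"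
   and Dsh: "\<forall>q\<in>Q. \<forall>q'\<in>Q. D q (sh q') = (if q = q' then 1 else 0)"
   and Dsupp: "\<forall>q\<in>Q. \<forall>h. h \<notin> B \<longrightarrow> D q h = 0"
   and fsupp: "\<forall>h. h \<notin> B \<longrightarrow> f h = 0"
  shows "(\<forall>h. f h = (\<Sum>p\<in>P. c p * ind p h) + (\<Sum>q\<in>Q. c' q * D q h))
     \<longleftrightarrow> ((\<forall>q\<in>Q. c' q = f (sh q)) \<and> (\<forall>p\<in>P. c p = f p - (\<Sum>q\<in>Q. c' q * D q p)))"
proof -
  have sD: "(\<Sum>q\<in>Q. c' q * D q (sh q0)) = c' q0" if "q0 \<in> Q" for q0 c'
  proof -
    have "(\<Sum>q\<in>Q. c' q * D q (sh q0)) = (\<Sum>q\<in>Q. if q = q0 then c' q else 0)"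
      using Dsh that by (auto intro!: sum.cong)
    then show ?thesis using finQ that by (simp add: sum.delta')
  qed
  show ?thesis
  proof
    assume E: "\<forall>h. f h = (\<Sum>p\<in>P. c p * ind p h) + (\<Sum>q\<in>Q. c' q * D q h)"
    show "(\<forall>q\<in>Q. c' q = f (sh q)) \<and> (\<forall>p\<in>P. c p = f p - (\<Sum>q\<in>Q. c' q * D q p))"
    proof (intro conjI ballI)
      fix q assume q: "q \<in> Q"
      have "sh q \<notin> P" using shP q by auto
      then show "c' q = f (sh q)" using E[rule_format, of "sh q"] sD[OF q] sum_ind[OF finP, of c "sh q"] by simp
    next
      fix p assume p: "p \<in> P"
      show "c p = f p - (\<Sum>q\<in>Q. c' q * D q p)" using E[rule_format, of p] p sum_ind[OF finP, of c p] by simp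
    qed
  next
    assume H: "(\<forall>q\<in>Q. c' q = f (sh q)) \<and> (\<forall>p\<in>P. c p = f p - (\<Sum>q\<in>Q. c' q * D q p))"
    show "\<forall>h. f h = (\<Sum>p\<in>P. c p * ind p h) + (\<Sum>q\<in>Q. c' q * D q h)"
    proof
      fix h
      show "f h = (\<Sum>p\<in>P. c p * ind p h) + (\<Sum>q\<in>Q. c' q * D q h)"
      proof (cases "h \<in> B")
        case True
        then consider "h \<in> P" | q where "q \<in> Q" "h = sh q" using cover by blast
        then show ?thesis
        proof cases
          case 1 then show ?thesis using H sum_ind[OF finP, of c h] by simp
        next
          case 2 then show ?thesis using H sum_ind[OF finP, of c h] sD shP by simp
        qed
      next
        case False
        then have "h \<notin> P" using PB by auto
        then show ?thesis using False fsupp Dsupp sum_ind[OF finP, of c h] by simp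
      qed
    qed
  qed
qed

lemma glue:
  fixes f :: "(nat\<Rightarrow>nat) \<Rightarrow> 'k::field" and D :: "(nat\<Rightarrow>nat) \<Rightarrow> (nat\<Rightarrow>nat) \<Rightarrow> 'k"
    and Gs :: "(nat \<times> ((nat\<Rightarrow>nat) \<Rightarrow> 'k)) set" and A :: "nat \<Rightarrow> ((nat\<Rightarrow>nat) \<Rightarrow> 'k) set"
    and act :: "nat \<Rightarrow> ((nat\<Rightarrow>nat) \<Rightarrow> 'k) \<Rightarrow> ((nat\<Rightarrow>nat) \<Rightarrow> 'k) \<Rightarrow> ((nat\<Rightarrow>nat) \<Rightarrow> 'k)"
  assumes PB: "P \<subseteq> B" and finP: "finite P" and finQ: "finite Q"
   and shP: "\<forall>q\<in>Q. sh q \<notin> P"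
   and cover: "\<forall>h\<in>B. h \<in> P \<or> (\<exists>q\<in>Q. h = sh q)"
   and Dsh: "\<forall>q\<in>Q. \<forall>q'\<in>Q. D q (sh q') = (if q = q' then 1 else 0)"
   and Dsupp: "\<forall>q\<in>Q. \<forall>h. h \<notin> B \<longrightarrow> D q h = 0"
   and fsupp: "\<forall>h. h \<notin> B \<longrightarrow> f h = 0"
   and a01: "a0 \<noteq> a1"
   and P0: "\<forall>p\<in>P. (a0, ind p) \<in> Gs" and Q0: "\<forall>q\<in>Q. (a1, ind q) \<in> Gs"
   and other: "\<forall>g\<in>Gs. g \<notin> (\<lambda>p. (a0, ind p)) ` P \<and> g \<notin> (\<lambda>q. (a1, ind q)) ` Q \<longrightarrow> A (fst g) \<subseteq> {0}"
   and zeroA: "\<forall>a. 0 \<in> A a"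
   and A0: "A a0 = {\<lambda>h. c * K h | c. True}" and A1: "A a1 = {\<lambda>h. c * U h | c. True}"
   and act0: "\<forall>p\<in>P. \<forall>c. act a0 (\<lambda>h. c * K h) (ind p) = (\<lambda>h. c * ind p h)"
   and act1: "\<forall>q\<in>Q. \<forall>c. act a1 (\<lambda>h. c * U h) (ind q) = (\<lambda>h. c * D q h)"
   and actz: "\<forall>a b. act a 0 b = 0"
  shows "\<exists>!\<alpha>. (\<forall>g\<in>Gs. \<alpha> g \<in> A (fst g)) \<and> (\<forall>g. g \<notin> Gs \<longrightarrow> \<alpha> g = 0) \<and>
     finite {g\<in>Gs. \<alpha> g \<noteq> 0} \<and> f = (\<Sum>g\<in>{g\<in>Gs. \<alpha> g \<noteq> 0}. act (fst g) (\<alpha> g) (snd g))"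
proof -
  define PP where "PP = (\<lambda>p. (a0, ind p :: (nat\<Rightarrow>nat) \<Rightarrow> 'k)) ` P"
  define QQ where "QQ = (\<lambda>q. (a1, ind q :: (nat\<Rightarrow>nat) \<Rightarrow> 'k)) ` Q"
  have finPQ: "finite (PP \<union> QQ)" unfolding PP_def QQ_def using finP finQ by auto
  have disj: "PP \<inter> QQ = {}" unfolding PP_def QQ_def using a01 by auto
  have PQG: "PP \<union> QQ \<subseteq> Gs" unfolding PP_def QQ_def using P0 Q0 by auto
  have injP: "inj_on (\<lambda>p. (a0, ind p :: (nat\<Rightarrow>nat) \<Rightarrow> 'k)) P" by (auto intro!: inj_onI dest: ind_inj)
  have injQ: "inj_on (\<lambda>q. (a1, ind q :: (nat\<Rightarrow>nat) \<Rightarrow> 'k)) Q" by (auto intro!: inj_onI dest: ind_inj)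
  note tri' = tri[OF PB finP finQ shP cover Dsh Dsupp fsupp]
  have S: "{g\<in>Gs. \<alpha> g \<noteq> 0} \<subseteq> PP \<union> QQ \<and>
      (\<forall>h. (\<Sum>g\<in>{g\<in>Gs. \<alpha> g \<noteq> 0}. act (fst g) (\<alpha> g) (snd g)) h
          = (\<Sum>p\<in>P. c p * ind p h) + (\<Sum>q\<in>Q. c' q * D q h))"
    if aA: "\<forall>g\<in>Gs. \<alpha> g \<in> A (fst g)"
      and ac: "\<forall>p\<in>P. \<alpha> (a0, ind p) = (\<lambda>h. c p * K h)"
      and ac': "\<forall>q\<in>Q. \<alpha> (a1, ind q) = (\<lambda>h. c' q * U h)" for \<alpha> c c'
  proof
    show sub: "{g\<in>Gs. \<alpha> g \<noteq> 0} \<subseteq> PP \<union> QQ"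
    proof
      fix g assume g: "g \<in> {g\<in>Gs. \<alpha> g \<noteq> 0}"
      show "g \<in> PP \<union> QQ"
      proof (rule ccontr)
        assume "g \<notin> PP \<union> QQ"
        then have "A (fst g) \<subseteq> {0}" using other g unfolding PP_def QQ_def by blast
        then show False using g aA by auto
      qed
    qed
    have "(\<Sum>g\<in>{g\<in>Gs. \<alpha> g \<noteq> 0}. act (fst g) (\<alpha> g) (snd g))
        = (\<Sum>g\<in>PP \<union> QQ. act (fst g) (\<alpha> g) (snd g))"
      by (rule sum.mono_neutral_left[OF finPQ sub]) (use PQG actz in auto)
    also have "\<dots> = (\<Sum>g\<in>PP. act (fst g) (\<alpha> g) (snd g)) + (\<Sum>g\<in>QQ. act (fst g) (\<alpha> g) (snd g))"
      using finPQ disj by (simp add: sum.union_disjoint)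
    also have "(\<Sum>g\<in>PP. act (fst g) (\<alpha> g) (snd g)) = (\<Sum>p\<in>P. (\<lambda>h. c p * ind p h))"
      unfolding PP_def using injP ac act0 by (simp add: sum.reindex)
    also have "(\<Sum>g\<in>QQ. act (fst g) (\<alpha> g) (snd g)) = (\<Sum>q\<in>Q. (\<lambda>h. c' q * D q h))"
      unfolding QQ_def using injQ ac' act1 by (simp add: sum.reindex)
    finally have X: "(\<Sum>g\<in>{g\<in>Gs. \<alpha> g \<noteq> 0}. act (fst g) (\<alpha> g) (snd g))
       = (\<Sum>p\<in>P. (\<lambda>h. c p * ind p h)) + (\<Sum>q\<in>Q. (\<lambda>h. c' q * D q h))" .
    show "\<forall>h. (\<Sum>g\<in>{g\<in>Gs. \<alpha> g \<noteq> 0}. act (fst g) (\<alpha> g) (snd g)) h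
          = (\<Sum>p\<in>P. c p * ind p h) + (\<Sum>q\<in>Q. c' q * D q h)"
    proof
      fix h
      have "(\<Sum>g\<in>{g\<in>Gs. \<alpha> g \<noteq> 0}. act (fst g) (\<alpha> g) (snd g)) h
        = ((\<Sum>p\<in>P. (\<lambda>h. c p * ind p h)) + (\<Sum>q\<in>Q. (\<lambda>h. c' q * D q h))) h"
        by (rule fun_cong[OF X])
      also have "\<dots> = (\<Sum>p\<in>P. (\<lambda>h. c p * ind p h)) h + (\<Sum>q\<in>Q. (\<lambda>h. c' q * D q h)) h"
        by (rule plus_fun_apply)
      also have "\<dots> = (\<Sum>p\<in>P. c p * ind p h) + (\<Sum>q\<in>Q. c' q * D q h)"
        by (rule arg_cong2[where f="(+)"]; rule sum_fun_apply)
      finally show "(\<Sum>g\<in>{g\<in>Gs. \<alpha> g \<noteq> 0}. act (fst g) (\<alpha> g) (snd g)) h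
          = (\<Sum>p\<in>P. c p * ind p h) + (\<Sum>q\<in>Q. c' q * D q h)" .
    qed
  qed
  define C' where "C' = (\<lambda>q. f (sh q))"
  define C where "C = (\<lambda>p. f p - (\<Sum>q\<in>Q. C' q * D q p))"
  define pt where "pt = (\<lambda>b. THE p. b = (ind p :: (nat\<Rightarrow>nat) \<Rightarrow> 'k))"
  have pt: "pt (ind p) = p" for p unfolding pt_def by (rule the_equality) (auto dest: ind_inj)
  define \<alpha>0 where "\<alpha>0 = (\<lambda>g. if g \<in> PP then (\<lambda>h. C (pt (snd g)) * K h)
       else if g \<in> QQ then (\<lambda>h. C' (pt (snd g)) * U h) else 0)"
  let ?\<Phi> = "\<lambda>\<alpha>. (\<forall>g\<in>Gs. \<alpha> g \<in> A (fst g)) \<and> (\<forall>g. g \<notin> Gs \<longrightarrow> \<alpha> g = 0) \<and>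
     finite {g\<in>Gs. \<alpha> g \<noteq> 0} \<and> f = (\<Sum>g\<in>{g\<in>Gs. \<alpha> g \<noteq> 0}. act (fst g) (\<alpha> g) (snd g))"
  show ?thesis
  proof (rule ex1I[of ?\<Phi> \<alpha>0])
    have aA: "\<forall>g\<in>Gs. \<alpha>0 g \<in> A (fst g)"
      unfolding \<alpha>0_def using A0 A1 zeroA unfolding PP_def QQ_def by auto
    have ac: "\<forall>p\<in>P. \<alpha>0 (a0, ind p) = (\<lambda>h. C p * K h)"
      unfolding \<alpha>0_def PP_def using pt by auto
    have ac': "\<forall>q\<in>Q. \<alpha>0 (a1, ind q) = (\<lambda>h. C' q * U h)"
      unfolding \<alpha>0_def PP_def QQ_def using pt a01 by auto
    note SS = S[OF aA ac ac']
    have E: "\<forall>h. f h = (\<Sum>p\<in>P. C p * ind p h) + (\<Sum>q\<in>Q. C' q * D q h)"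
    proof -
      have cond: "(\<forall>q\<in>Q. C' q = f (sh q)) \<and> (\<forall>p\<in>P. C p = f p - (\<Sum>q\<in>Q. C' q * D q p))"
        unfolding C_def C'_def by (rule conjI; rule ballI; rule refl)
      show ?thesis using tri'[of C C'] cond by blast
    qed
    show "?\<Phi> \<alpha>0"
    proof (intro conjI)
      show "\<forall>g\<in>Gs. \<alpha>0 g \<in> A (fst g)" by (fact aA)
      show "\<forall>g. g \<notin> Gs \<longrightarrow> \<alpha>0 g = 0" unfolding \<alpha>0_def using PQG by auto
      show "finite {g\<in>Gs. \<alpha>0 g \<noteq> 0}" using SS finPQ finite_subset by blast
      show "f = (\<Sum>g\<in>{g\<in>Gs. \<alpha>0 g \<noteq> 0}. act (fst g) (\<alpha>0 g) (snd g))"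
      proof (rule ext)
        fix h
        show "f h = (\<Sum>g\<in>{g\<in>Gs. \<alpha>0 g \<noteq> 0}. act (fst g) (\<alpha>0 g) (snd g)) h"
          using E[rule_format, of h] SS[THEN conjunct2, rule_format, of h] by (rule trans[OF _ sym])
      qed
    qed
  next
    fix \<alpha> assume H: "?\<Phi> \<alpha>"
    define c where "c = (\<lambda>p. SOME c. \<alpha> (a0, ind p) = (\<lambda>h. c * K h))"
    define c' where "c' = (\<lambda>q. SOME c. \<alpha> (a1, ind q) = (\<lambda>h. c * U h))"
    have ac: "\<forall>p\<in>P. \<alpha> (a0, ind p) = (\<lambda>h. c p * K h)"
    proof
      fix p assume p: "p \<in> P"
      have "\<alpha> (a0, ind p) \<in> A a0" using H P0 p by force
      then have "\<exists>c. \<alpha> (a0, ind p) = (\<lambda>h. c * K h)" using A0 by auto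
      then show "\<alpha> (a0, ind p) = (\<lambda>h. c p * K h)" unfolding c_def by (rule someI_ex)
    qed
    have ac': "\<forall>q\<in>Q. \<alpha> (a1, ind q) = (\<lambda>h. c' q * U h)"
    proof
      fix q assume q: "q \<in> Q"
      have "\<alpha> (a1, ind q) \<in> A a1" using H Q0 q by force
      then have "\<exists>c. \<alpha> (a1, ind q) = (\<lambda>h. c * U h)" using A1 by auto
      then show "\<alpha> (a1, ind q) = (\<lambda>h. c' q * U h)" unfolding c'_def by (rule someI_ex)
    qed
    have aA: "\<forall>g\<in>Gs. \<alpha> g \<in> A (fst g)" using H by blast
    note SS = S[OF aA ac ac']
    have E: "\<forall>h. f h = (\<Sum>p\<in>P. c p * ind p h) + (\<Sum>q\<in>Q. c' q * D q h)"
    proof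
      fix h
      have "f h = (\<Sum>g\<in>{g\<in>Gs. \<alpha> g \<noteq> 0}. act (fst g) (\<alpha> g) (snd g)) h"
        using H by metis
      then show "f h = (\<Sum>p\<in>P. c p * ind p h) + (\<Sum>q\<in>Q. c' q * D q h)"
        using SS[THEN conjunct2, rule_format, of h] by (rule trans)
    qed
    have cc: "(\<forall>q\<in>Q. c' q = f (sh q)) \<and> (\<forall>p\<in>P. c p = f p - (\<Sum>q\<in>Q. c' q * D q p))"
      using tri' E by blast
    then have cc': "\<forall>q\<in>Q. c' q = C' q" unfolding C'_def by auto
    then have ccP: "\<forall>p\<in>P. c p = C p" using cc unfolding C_def by (auto intro!: sum.cong)
    show "\<alpha> = \<alpha>0"
    proof
      fix g
      show "\<alpha> g = \<alpha>0 g"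
      proof (cases "g \<in> PP")
        case True
        then obtain p where p: "p \<in> P" "g = (a0, ind p)" unfolding PP_def by auto
        then show ?thesis using ac ccP pt unfolding \<alpha>0_def PP_def by auto
      next
        case nP: False
        show ?thesis
        proof (cases "g \<in> QQ")
          case True
          obtain q where q: "q \<in> Q" "g = (a1, ind q)" using True unfolding QQ_def by auto
          then show ?thesis using ac' cc' pt nP True unfolding \<alpha>0_def by auto
        next
          case False
          then have "\<alpha>0 g = 0" using nP unfolding \<alpha>0_def by auto
          moreover have "\<alpha> g = 0"
          proof (cases "g \<in> Gs")
            case True
            then have "A (fst g) \<subseteq> {0}" using other nP False unfolding PP_def QQ_def by blast
            then show ?thesis using H True by auto
          next
            case False then show ?thesis using H by blast
          qed
          ultimately show ?thesis by simp
        qed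
      qed
    qed
  qed
qed

lemma hom_mono: "g \<in> hom_inj m n \<Longrightarrow> i < j \<Longrightarrow> j \<le> m \<Longrightarrow> g i < g j"
  unfolding hom_inj_def strict_mono_on_def by auto

lemma hom_mono_le: "g \<in> hom_inj m n \<Longrightarrow> i \<le> j \<Longrightarrow> j \<le> m \<Longrightarrow> g i \<le> g j"
  using hom_mono[of g m n i j] by (cases "i = j") auto

lemma hom_le: "g \<in> hom_inj m n \<Longrightarrow> i \<le> m \<Longrightarrow> g i \<le> n"
  unfolding hom_inj_def by (auto simp: image_subset_iff)

lemma hom_out: "g \<in> hom_inj m n \<Longrightarrow> m < i \<Longrightarrow> g i = 0"
  unfolding hom_inj_def by auto

lemma hom_intro: "(\<And>i j. i < j \<Longrightarrow> j \<le> m \<Longrightarrow> g i < g j) \<Longrightarrow> (\<And>i. i \<le> m \<Longrightarrow> g i \<le> n)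
   \<Longrightarrow> (\<And>i. m < i \<Longrightarrow> g i = 0) \<Longrightarrow> g \<in> hom_inj m n"
  unfolding hom_inj_def strict_mono_on_def by auto

lemma hom_ext: "g \<in> hom_inj m n \<Longrightarrow> g' \<in> hom_inj m n' \<Longrightarrow> (\<And>i. i \<le> m \<Longrightarrow> g i = g' i) \<Longrightarrow> g = g'"
  unfolding hom_inj_def by (auto simp: fun_eq_iff) (metis not_le)

lemma alt_sum_even: "even n \<Longrightarrow> (\<Sum>i=0..n. (-1::'k::field)^i) = 1"
proof -
  have "(\<Sum>i=0..2*k. (-1::'k)^i) = 1" for k
    by (induction k) (auto simp: numeral_2_eq_2)
  then show "even n \<Longrightarrow> ?thesis" by (auto elim!: evenE)
qed

lemma upath_zero_ex: "a \<le> z \<Longrightarrow> z - a \<ge> 2 \<Longrightarrow> u \<in> uimg a z \<Longrightarrow> u = 0"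
  unfolding uimg_def using upath_zero[of "z - a" a] by (auto simp: fun_eq_iff)

lemma uimg_zero: "(0::(nat\<Rightarrow>nat)\<Rightarrow>'k::field) \<in> uimg a z"
  unfolding uimg_def by (auto simp: fun_eq_iff intro: exI[of _ 0])

lemma uimg_gt: "z < a \<Longrightarrow> u \<in> uimg a z \<Longrightarrow> u = 0"
  unfolding uimg_def by (auto simp: fun_eq_iff)

lemma uimg_eq: "uimg z z = {\<lambda>h. c * kid z h | c. True}"
  unfolding uimg_def by simp

lemma uimg_one: "uimg m (Suc m) = {\<lambda>h. c * uD (Suc m) h | c. True}"
proof -
  have "uimg m (Suc m) = {\<lambda>h. c * upath m 1 h | c. True}"
    by (simp add: uimg_def del: upath.simps)
  also have "\<dots> = {\<lambda>h. c * uD (Suc m) h | c. True}"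
    by (simp only: upath_one Suc_eq_plus1)
  finally show ?thesis .
qed

definition shL :: "nat \<Rightarrow> (nat \<Rightarrow> nat) \<Rightarrow> (nat \<Rightarrow> nat)" where
  "shL x g = (\<lambda>i. if i \<le> x then Suc (g i) else 0)"

lemma DL_eval:
  assumes q: "q \<in> hom_inj x (z - 1)" and z: "1 \<le> z"
  shows "kcomp x (z - 1) z (uD z) (ind q) h = (\<Sum>i=0..z. (-1::'k::field)^i * (if cmp x (coface z i) q = h then 1 else 0))"
proof -
  have "kcomp x (z - 1) z (uD z) (ind q) h = (\<Sum>g'\<in>hom_inj (z - 1) z. (if cmp x g' q = h then 1 else 0) * (uD z g' :: 'k))"
    unfolding kcomp_ind_right[OF q] by (auto intro!: sum.cong)
  also have "\<dots> = (\<Sum>i=0..z. (-1::'k::field)^i * (if cmp x (coface z i) q = h then 1 else 0))"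
    by (subst sum_uD) (use hom_inj_finite coface_hom z in \<open>auto simp: mult.commute\<close>)
  finally show ?thesis .
qed

lemma cmp_coface_shL:
  assumes q: "q \<in> hom_inj x (z - 1)" and q': "q' \<in> hom_inj x (z - 1)" and z: "1 \<le> z"
    and ev: "even (q 0)" "even (q' 0)"
  shows "(cmp x (coface z i) q = shL x q') \<longleftrightarrow> (i \<le> q 0 \<and> q = q')"
proof
  assume H: "cmp x (coface z i) q = shL x q'"
  have le: "q k \<le> z - 1" if "k \<le> x" for k using hom_le[OF q that] .
  have H0: "cmp x (coface z i) q 0 = shL x q' 0" using H by simp
  show "i \<le> q 0 \<and> q = q'"
  proof (cases "i \<le> q 0")
    case True
    have "q k = q' k" if k: "k \<le> x" for k
    proof -
      have "q 0 \<le> q k" using hom_mono_le[OF q _ k] by simp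
      then have "cmp x (coface z i) q k = Suc (q k)"
        using True le[OF k] k unfolding cmp_def coface_def by auto
      moreover have "cmp x (coface z i) q k = Suc (q' k)" using fun_cong[OF H, of k] k unfolding shL_def by simp
      ultimately show ?thesis by simp
    qed
    then show ?thesis using True hom_ext[OF q q'] by blast
  next
    case False
    then have "cmp x (coface z i) q 0 = q 0" using le[of 0] unfolding cmp_def coface_def by auto
    then have "q 0 = Suc (q' 0)" using H0 unfolding shL_def by simp
    then show ?thesis using ev by simp
  qed
next
  assume H: "i \<le> q 0 \<and> q = q'"
  have le: "q k \<le> z - 1" if "k \<le> x" for k using hom_le[OF q that] .
  show "cmp x (coface z i) q = shL x q'"
  proof
    fix k
    show "cmp x (coface z i) q k = shL x q' k"
    proof (cases "k \<le> x")
      case True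
      have "q 0 \<le> q k" using hom_mono_le[OF q _ True] by simp
      then show ?thesis using H le[OF True] True unfolding cmp_def coface_def shL_def by auto
    qed (auto simp: cmp_def shL_def)
  qed
qed

lemma DL_sh:
  assumes q: "q \<in> hom_inj x (z - 1)" and q': "q' \<in> hom_inj x (z - 1)" and z: "1 \<le> z"
    and ev: "even (q 0)" "even (q' 0)"
  shows "kcomp x (z - 1) z (uD z) (ind q) (shL x q') = (if q = q' then (1::'k::field) else 0)"
proof -
  have q0: "q 0 \<le> z" using hom_le[OF q, of 0] by simp
  have "kcomp x (z - 1) z (uD z) (ind q) (shL x q') = (\<Sum>i=0..z. (-1::'k)^i * (if i \<le> q 0 \<and> q = q' then 1 else 0))"
    unfolding DL_eval[OF q z] using cmp_coface_shL[OF q q' z ev] by simp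
  also have "\<dots> = (if q = q' then (\<Sum>i\<in>{0..z}. if i \<in> {..q 0} then (-1::'k)^i else 0) else 0)"
    by (auto intro!: sum.cong)
  also have "\<dots> = (if q = q' then (\<Sum>i\<in>{0..q 0}. (-1::'k)^i) else 0)"
  proof -
    have "{0..z} \<inter> {..q 0} = {0..q 0}" using q0 by auto
    then have "(\<Sum>i\<in>{0..z}. if i \<in> {..q 0} then (-1::'k)^i else 0) = (\<Sum>i\<in>{0..q 0}. (-1::'k)^i)"
      using sum.inter_restrict[of "{0..z}" "\<lambda>i. (-1::'k)^i" "{..q 0}"] by simp
    then show ?thesis by (cases "q = q'") simp_all
  qed
  finally have X: "kcomp x (z - 1) z (uD z) (ind q) (shL x q') = (if q = q' then (\<Sum>i\<in>{0..q 0}. (-1::'k)^i) else 0)" .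
  show ?thesis unfolding X alt_sum_even[OF ev(1)] by (rule refl)
qed

definition GL :: "nat \<Rightarrow> (nat \<times> ((nat \<Rightarrow> nat) \<Rightarrow> 'k::field)) set" where
  "GL x = {(a, ind g) | a g. g \<in> hom_inj x a \<and> even (g 0)}"

lemma zero_V: "(0::(nat\<Rightarrow>nat)\<Rightarrow>'k::field) = (\<lambda>h. 0)" by (simp add: fun_eq_iff)

lemma left_at:
  fixes f :: "(nat\<Rightarrow>nat) \<Rightarrow> 'k::field"
  assumes f: "f \<in> klin x z"
  shows "\<exists>!\<alpha>. (\<forall>g\<in>GL x. \<alpha> g \<in> uimg (fst g) z) \<and> (\<forall>g. g \<notin> GL x \<longrightarrow> \<alpha> g = 0) \<and>
     finite {g\<in>GL x. \<alpha> g \<noteq> 0} \<and> f = (\<Sum>g\<in>{g\<in>GL x. \<alpha> g \<noteq> 0}. kcomp x (fst g) z (\<alpha> g) (snd g))"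
proof -
  define P where "P = {g\<in>hom_inj x z. even (g 0)}"
  define Q where "Q = (if z = 0 then {} else {g\<in>hom_inj x (z-1). even (g 0)})"
  define a1 where "a1 = (if z = 0 then 1 else z - 1)"
  define U where "U = (if z = 0 then 0 else uD z :: (nat\<Rightarrow>nat)\<Rightarrow>'k)"
  define D where "D = (\<lambda>g. kcomp x (z-1) z (uD z) (ind g) :: (nat\<Rightarrow>nat)\<Rightarrow>'k)"
  have PB: "P \<subseteq> hom_inj x z" unfolding P_def by auto
  have finP: "finite P" unfolding P_def using hom_inj_finite by auto
  have finQ: "finite Q" unfolding Q_def using hom_inj_finite by auto
  have shP: "\<forall>q\<in>Q. shL x q \<notin> P" unfolding P_def Q_def shL_def by (auto split: if_splits)
  have cover: "\<forall>h\<in>hom_inj x z. h \<in> P \<or> (\<exists>q\<in>Q. h = shL x q)"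
  proof
    fix h assume h: "h \<in> hom_inj x z"
    show "h \<in> P \<or> (\<exists>q\<in>Q. h = shL x q)"
    proof (cases "even (h 0)")
      case True then show ?thesis using h unfolding P_def by auto
    next
      case False
      then have h0: "1 \<le> h 0" by (cases "h 0") auto
      have hge: "1 \<le> h i" if "i \<le> x" for i using hom_mono_le[OF h _ that, of 0] h0 by simp
      have z: "1 \<le> z" using hom_le[OF h, of 0] h0 by simp
      define q where "q = (\<lambda>i. if i \<le> x then h i - 1 else 0)"
      have qh: "q \<in> hom_inj x (z - 1)"
      proof (rule hom_intro)
        fix i j assume ij: "i < j" "j \<le> x"
        have "h i < h j" by (rule hom_mono[OF h ij])
        moreover have "1 \<le> h i" using hge ij by simp
        ultimately show "q i < q j" unfolding q_def using ij by simp
      next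
        fix i assume i: "i \<le> x"
        have "h i \<le> z" by (rule hom_le[OF h i])
        then show "q i \<le> z - 1" unfolding q_def using i by simp
      qed (auto simp: q_def)
      have "even (q 0)" unfolding q_def using False h0 by auto
      then have "q \<in> Q" using qh z unfolding Q_def by auto
      moreover have "h = shL x q"
      proof
        fix i show "h i = shL x q i"
        proof (cases "i \<le> x")
          case True then show ?thesis unfolding shL_def q_def using hge[OF True] by simp
        next
          case False then show ?thesis unfolding shL_def q_def using hom_out[OF h] by simp
        qed
      qed
      ultimately show ?thesis by blast
    qed
  qed
  have Dsh: "\<forall>q\<in>Q. \<forall>q'\<in>Q. D q (shL x q') = (if q = q' then 1 else 0)"
  proof (intro ballI)
    fix q q' assume "q \<in> Q" "q' \<in> Q"
    then have hq: "z \<noteq> 0" "q \<in> hom_inj x (z-1)" "q' \<in> hom_inj x (z-1)" "even (q 0)" "even (q' 0)"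
      unfolding Q_def by (auto split: if_splits)
    show "D q (shL x q') = (if q = q' then 1 else 0)" unfolding D_def
      by (rule DL_sh[OF hq(2) hq(3) _ hq(4) hq(5)]) (use hq(1) in simp)
  qed
  have Dsupp: "\<forall>q\<in>Q. \<forall>h. h \<notin> hom_inj x z \<longrightarrow> D q h = 0"
    unfolding D_def using kcomp_klin[of x "z-1" z] unfolding klin_def by blast
  have fsupp: "\<forall>h. h \<notin> hom_inj x z \<longrightarrow> f h = 0" using f unfolding klin_def by blast
  have a01: "z \<noteq> a1" unfolding a1_def by auto
  have P0: "\<forall>p\<in>P. (z, ind p) \<in> GL x" unfolding P_def GL_def by auto
  have Q0: "\<forall>q\<in>Q. (a1, ind q) \<in> GL x" unfolding Q_def GL_def a1_def by auto
  have other: "\<forall>g\<in>GL x. g \<notin> (\<lambda>p. (z, ind p)) ` P \<and> g \<notin> (\<lambda>q. (a1, ind q)) ` Q \<longrightarrow> uimg (fst g) z \<subseteq> {0}"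
  proof (intro ballI impI)
    fix g assume g: "g \<in> GL x" and n: "g \<notin> (\<lambda>p. (z, ind p)) ` P \<and> g \<notin> (\<lambda>q. (a1, ind q)) ` Q"
    obtain a g0 where g0: "g = (a, ind g0)" "g0 \<in> hom_inj x a" "even (g0 0)" using g unfolding GL_def by auto
    have "a \<noteq> z" using n g0 unfolding P_def by auto
    moreover have "\<not> (z \<noteq> 0 \<and> a = z - 1)" using n g0 unfolding Q_def a1_def by auto
    ultimately consider "z < a" | "a \<le> z" "z - a \<ge> 2" by linarith
    then show "uimg (fst g) z \<subseteq> {0}"
    proof cases
      case 1 then show ?thesis using uimg_gt g0 by auto
    next
      case 2 then show ?thesis using upath_zero_ex g0 by auto
    qed
  qed
  have zeroA: "\<forall>a. 0 \<in> uimg a z" using uimg_zero by blast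
  have A0: "uimg z z = {\<lambda>h. c * kid z h | c. True}" by (rule uimg_eq)
  have A1: "uimg a1 z = {\<lambda>h. c * U h | c. True}"
  proof (cases "z = 0")
    case True then show ?thesis unfolding a1_def U_def uimg_def by simp
  next
    case False
    then have "z = Suc (z - 1)" by simp
    then show ?thesis using uimg_one[of "z - 1"] False unfolding a1_def U_def by simp
  qed
  have act0: "\<forall>p\<in>P. \<forall>c. kcomp x z z (\<lambda>h. c * kid z h) (ind p) = (\<lambda>h. c * ind p h)"
  proof (intro ballI allI)
    fix p c assume "p \<in> P"
    then have "ind p \<in> klin x z" unfolding P_def using ind_klin by blast
    then show "kcomp x z z (\<lambda>h. c * kid z h) (ind p) = (\<lambda>h. c * ind p h)"
      unfolding kcomp_scale_left kcomp_kid_left[OF \<open>ind p \<in> klin x z\<close>] by simp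
  qed
  have act1: "\<forall>q\<in>Q. \<forall>c. kcomp x a1 z (\<lambda>h. c * U h) (ind q) = (\<lambda>h. c * D q h)"
  proof (intro ballI allI)
    fix q c assume "q \<in> Q"
    then have "z \<noteq> 0" unfolding Q_def by (auto split: if_splits)
    then show "kcomp x a1 z (\<lambda>h. c * U h) (ind q) = (\<lambda>h. c * D q h)"
      unfolding a1_def U_def D_def using kcomp_scale_left by simp
  qed
  have actz: "\<forall>a b. kcomp x a z 0 b = 0" unfolding zero_V using kcomp_zero_left by blast
  show ?thesis
    by (rule glue[OF PB finP finQ shP cover Dsh Dsupp fsupp a01 P0 Q0 other zeroA A0 A1 act0 act1 actz])
qed

definition shR :: "nat \<Rightarrow> (nat \<Rightarrow> nat) \<Rightarrow> (nat \<Rightarrow> nat)" where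
  "shR x g = (\<lambda>i. if i \<le> x then g (Suc i) else 0)"

lemma DR_eval:
  assumes q: "q \<in> hom_inj (Suc x) z"
  shows "kcomp x (Suc x) z (ind q) (uD (Suc x)) h = (\<Sum>i=0..Suc x. (-1::'k::field)^i * (if cmp x q (coface (Suc x) i) = h then 1 else 0))"
proof -
  have "kcomp x (Suc x) z (ind q) (uD (Suc x)) h = (\<Sum>g\<in>hom_inj x (Suc x). (if cmp x q g = h then 1 else 0) * (uD (Suc x) g :: 'k))"
    unfolding kcomp_ind_left[OF q] by (auto intro!: sum.cong)
  also have "\<dots> = (\<Sum>i=0..Suc x. (-1::'k::field)^i * (if cmp x q (coface (Suc x) i) = h then 1 else 0))"
    by (subst sum_uD) (use hom_inj_finite coface_hom[of "Suc x"] in \<open>auto simp: mult.commute\<close>)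
  finally show ?thesis .
qed

lemma cmp_coface_shR:
  assumes q: "q \<in> hom_inj (Suc x) z" and q': "q' \<in> hom_inj (Suc x) z"
    and z0: "q 0 = 0" "q' 0 = 0"
  shows "(cmp x q (coface (Suc x) i) = shR x q') \<longleftrightarrow> (i = 0 \<and> q = q')"
proof
  assume H: "cmp x q (coface (Suc x) i) = shR x q'"
  have q'1: "q' 0 < q' 1" using hom_mono[OF q', of 0 1] by simp
  show "i = 0 \<and> q = q'"
  proof (cases "i = 0")
    case True
    have "q k = q' k" if k: "k \<le> Suc x" for k
    proof (cases k)
      case 0 then show ?thesis using z0 by simp
    next
      case (Suc k')
      then have "k' \<le> x" using k by simp
      then show ?thesis using fun_cong[OF H, of k'] True Suc unfolding cmp_def coface_def shR_def by simp
    qed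
    then show ?thesis using True hom_ext[OF q q'] by blast
  next
    case False
    have "cmp x q (coface (Suc x) i) 0 = 0" using False z0 unfolding cmp_def coface_def by simp
    moreover have "shR x q' 0 = q' 1" unfolding shR_def by simp
    ultimately show ?thesis using H q'1 z0 by simp
  qed
next
  assume H: "i = 0 \<and> q = q'"
  then show "cmp x q (coface (Suc x) i) = shR x q'"
    unfolding cmp_def coface_def shR_def by (auto simp: fun_eq_iff)
qed

lemma DR_sh:
  assumes q: "q \<in> hom_inj (Suc x) z" and q': "q' \<in> hom_inj (Suc x) z"
    and z0: "q 0 = 0" "q' 0 = 0"
  shows "kcomp x (Suc x) z (ind q) (uD (Suc x)) (shR x q') = (if q = q' then (1::'k::field) else 0)"
proof -
  have "kcomp x (Suc x) z (ind q) (uD (Suc x)) (shR x q') = (\<Sum>i=0..Suc x. (-1::'k)^i * (if i = 0 \<and> q = q' then 1 else 0))"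
    unfolding DR_eval[OF q] using cmp_coface_shR[OF q q' z0] by simp
  also have "\<dots> = (\<Sum>i\<in>{0..Suc x}. if i = 0 then (if q = q' then 1 else 0) else (0::'k))"
    by (rule sum.cong) auto
  also have "\<dots> = (if q = q' then 1 else 0)" by (simp add: sum.delta)
  finally show ?thesis .
qed

definition GR :: "nat \<Rightarrow> (nat \<times> ((nat \<Rightarrow> nat) \<Rightarrow> 'k::field)) set" where
  "GR z = {(a, ind g) | a g. g \<in> hom_inj a z \<and> g 0 = 0}"

lemma right_at:
  fixes f :: "(nat\<Rightarrow>nat) \<Rightarrow> 'k::field"
  assumes f: "f \<in> klin x z"
  shows "\<exists>!\<alpha>. (\<forall>g\<in>GR z. \<alpha> g \<in> uimg x (fst g)) \<and> (\<forall>g. g \<notin> GR z \<longrightarrow> \<alpha> g = 0) \<and>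
     finite {g\<in>GR z. \<alpha> g \<noteq> 0} \<and> f = (\<Sum>g\<in>{g\<in>GR z. \<alpha> g \<noteq> 0}. kcomp x (fst g) z (snd g) (\<alpha> g))"
proof -
  define P where "P = {g\<in>hom_inj x z. g 0 = 0}"
  define Q where "Q = {g\<in>hom_inj (Suc x) z. g 0 = 0}"
  define D where "D = (\<lambda>g. kcomp x (Suc x) z (ind g) (uD (Suc x)) :: (nat\<Rightarrow>nat)\<Rightarrow>'k)"
  have PB: "P \<subseteq> hom_inj x z" unfolding P_def by auto
  have finP: "finite P" unfolding P_def using hom_inj_finite by auto
  have finQ: "finite Q" unfolding Q_def using hom_inj_finite by auto
  have shP: "\<forall>q\<in>Q. shR x q \<notin> P"
  proof
    fix q assume "q \<in> Q"
    then have q: "q \<in> hom_inj (Suc x) z" "q 0 = 0" unfolding Q_def by auto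
    have "q 0 < q 1" using hom_mono[OF q(1), of 0 1] by simp
    then show "shR x q \<notin> P" unfolding P_def shR_def using q(2) by simp
  qed
  have cover: "\<forall>h\<in>hom_inj x z. h \<in> P \<or> (\<exists>q\<in>Q. h = shR x q)"
  proof
    fix h assume h: "h \<in> hom_inj x z"
    show "h \<in> P \<or> (\<exists>q\<in>Q. h = shR x q)"
    proof (cases "h 0 = 0")
      case True then show ?thesis using h unfolding P_def by auto
    next
      case False
      have hge: "0 < h i" if "i \<le> x" for i using hom_mono_le[OF h _ that, of 0] False by simp
      define q where "q = (\<lambda>i. if i = 0 then 0 else if i \<le> Suc x then h (i - 1) else 0)"
      have qh: "q \<in> hom_inj (Suc x) z"
      proof (rule hom_intro)
        fix i j assume ij: "i < j" "j \<le> Suc x"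
        show "q i < q j"
        proof (cases "i = 0")
          case True
          then show ?thesis unfolding q_def using ij hge[of "j - 1"] by simp
        next
          case False
          have "h (i - 1) < h (j - 1)" by (rule hom_mono[OF h]) (use ij False in auto)
          then show ?thesis unfolding q_def using ij False by simp
        qed
      next
        fix i assume i: "i \<le> Suc x"
        show "q i \<le> z"
        proof (cases "i = 0")
          case False
          have "h (i - 1) \<le> z" by (rule hom_le[OF h]) (use i in simp)
          then show ?thesis unfolding q_def using i False by simp
        qed (simp add: q_def)
      qed (auto simp: q_def)
      have "q \<in> Q" using qh unfolding Q_def q_def by simp
      moreover have "h = shR x q"
      proof
        fix i show "h i = shR x q i"
        proof (cases "i \<le> x")
          case True then show ?thesis unfolding shR_def q_def by simp
        next
          case False then show ?thesis unfolding shR_def q_def using hom_out[OF h] by simp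
        qed
      qed
      ultimately show ?thesis by blast
    qed
  qed
  have Dsh: "\<forall>q\<in>Q. \<forall>q'\<in>Q. D q (shR x q') = (if q = q' then 1 else 0)"
  proof (intro ballI)
    fix q q' assume "q \<in> Q" "q' \<in> Q"
    then have hq: "q \<in> hom_inj (Suc x) z" "q' \<in> hom_inj (Suc x) z" "q 0 = 0" "q' 0 = 0"
      unfolding Q_def by auto
    show "D q (shR x q') = (if q = q' then 1 else 0)" unfolding D_def
      by (rule DR_sh[OF hq])
  qed
  have Dsupp: "\<forall>q\<in>Q. \<forall>h. h \<notin> hom_inj x z \<longrightarrow> D q h = 0"
    unfolding D_def using kcomp_klin[of x "Suc x" z] unfolding klin_def by blast
  have fsupp: "\<forall>h. h \<notin> hom_inj x z \<longrightarrow> f h = 0" using f unfolding klin_def by blast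
  have a01: "x \<noteq> Suc x" by simp
  have P0: "\<forall>p\<in>P. (x, ind p) \<in> GR z" unfolding P_def GR_def by auto
  have Q0: "\<forall>q\<in>Q. (Suc x, ind q) \<in> GR z" unfolding Q_def GR_def by auto
  have other: "\<forall>g\<in>GR z. g \<notin> (\<lambda>p. (x, ind p)) ` P \<and> g \<notin> (\<lambda>q. (Suc x, ind q)) ` Q \<longrightarrow> uimg x (fst g) \<subseteq> {0}"
  proof (intro ballI impI)
    fix g assume g: "g \<in> GR z" and n: "g \<notin> (\<lambda>p. (x, ind p)) ` P \<and> g \<notin> (\<lambda>q. (Suc x, ind q)) ` Q"
    obtain a g0 where g0: "g = (a, ind g0)" "g0 \<in> hom_inj a z" "g0 0 = 0" using g unfolding GR_def by auto
    have "a \<noteq> x" using n g0 unfolding P_def by auto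
    moreover have "a \<noteq> Suc x" using n g0 unfolding Q_def by auto
    ultimately consider "a < x" | "x \<le> a" "a - x \<ge> 2" by linarith
    then show "uimg x (fst g) \<subseteq> {0}"
    proof cases
      case 1 then show ?thesis using uimg_gt g0 by auto
    next
      case 2 then show ?thesis using upath_zero_ex g0 by auto
    qed
  qed
  have zeroA: "\<forall>a. 0 \<in> uimg x a" using uimg_zero by blast
  have A0: "uimg x x = {\<lambda>h. c * kid x h | c. True}" by (rule uimg_eq)
  have A1: "uimg x (Suc x) = {\<lambda>h. c * uD (Suc x) h | c. True}" by (rule uimg_one)
  have act0: "\<forall>p\<in>P. \<forall>c. kcomp x x z (ind p) (\<lambda>h. c * kid x h) = (\<lambda>h. c * ind p h)"
  proof (intro ballI allI)
    fix p c assume "p \<in> P"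
    then have pk: "ind p \<in> klin x z" unfolding P_def using ind_klin by blast
    show "kcomp x x z (ind p) (\<lambda>h. c * kid x h) = (\<lambda>h. c * ind p h)"
      unfolding kcomp_scale_right kcomp_kid_right[OF pk] by simp
  qed
  have act1: "\<forall>q\<in>Q. \<forall>c. kcomp x (Suc x) z (ind q) (\<lambda>h. c * uD (Suc x) h) = (\<lambda>h. c * D q h)"
    unfolding D_def kcomp_scale_right by simp
  have actz: "\<forall>a b. kcomp x a z b 0 = 0" unfolding zero_V using kcomp_zero_right by blast
  show ?thesis
    by (rule glue[where act = "\<lambda>a u b. kcomp x a z b u" and A = "\<lambda>a. uimg x a",
          OF PB finP finQ shP cover Dsh Dsupp fsupp a01 P0 Q0 other zeroA A0 A1 act0 act1 actz])
qed

theorem lemma2p1: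
  shows "free_left (uimg :: nat \<Rightarrow> nat \<Rightarrow> ((nat \<Rightarrow> nat) \<Rightarrow> 'k::field) set) klin kcomp
       \<and> free_right (uimg :: nat \<Rightarrow> nat \<Rightarrow> ((nat \<Rightarrow> nat) \<Rightarrow> 'k::field) set) klin kcomp"
proof
  show "free_left (uimg :: nat \<Rightarrow> nat \<Rightarrow> ((nat \<Rightarrow> nat) \<Rightarrow> 'k::field) set) klin kcomp"
    unfolding free_left_def
  proof (rule exI[of _ GL], intro allI conjI ballI)
    fix x and p :: "nat \<times> ((nat \<Rightarrow> nat) \<Rightarrow> 'k)" assume "p \<in> GL x"
    then show "case p of (a, b) \<Rightarrow> b \<in> klin x a" unfolding GL_def using ind_klin by auto
  next
    fix x z and f :: "(nat \<Rightarrow> nat) \<Rightarrow> 'k" assume "f \<in> klin x z"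
    then show "\<exists>!\<alpha>. (\<forall>g\<in>GL x. \<alpha> g \<in> uimg (fst g) z) \<and> (\<forall>g. g \<notin> GL x \<longrightarrow> \<alpha> g = 0) \<and>
       finite {g\<in>GL x. \<alpha> g \<noteq> 0} \<and> f = (\<Sum>g\<in>{g\<in>GL x. \<alpha> g \<noteq> 0}. kcomp x (fst g) z (\<alpha> g) (snd g))"
      by (rule left_at)
  qed
  show "free_right (uimg :: nat \<Rightarrow> nat \<Rightarrow> ((nat \<Rightarrow> nat) \<Rightarrow> 'k::field) set) klin kcomp"
    unfolding free_right_def
  proof (rule exI[of _ GR], intro allI conjI ballI)
    fix z and p :: "nat \<times> ((nat \<Rightarrow> nat) \<Rightarrow> 'k)" assume "p \<in> GR z"
    then show "case p of (a, b) \<Rightarrow> b \<in> klin a z" unfolding GR_def using ind_klin by auto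
  next
    fix x z and f :: "(nat \<Rightarrow> nat) \<Rightarrow> 'k" assume "f \<in> klin x z"
    then show "\<exists>!\<alpha>. (\<forall>g\<in>GR z. \<alpha> g \<in> uimg x (fst g)) \<and> (\<forall>g. g \<notin> GR z \<longrightarrow> \<alpha> g = 0) \<and>
       finite {g\<in>GR z. \<alpha> g \<noteq> 0} \<and> f = (\<Sum>g\<in>{g\<in>GR z. \<alpha> g \<noteq> 0}. kcomp x (fst g) z (snd g) (\<alpha> g))"
      by (rule right_at)
  qed
qed

end
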